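(* For every $n\ge 3$ and every $\eta>0$ there exist a $1$-dimensional Euclidean graph $G$ on $n$ vertices and a range assignment $r$ such that $SDG(G,r)$ is connected and the weight-coefficient of $SDG(G,r)$ with respect to $G$ is at least $n-2-\eta$. Concretely, take points $s,u_1,\dots,u_{n-2},t$ on the real line at coordinates $0,1,1+\epsilon,\dots,1+(n-3)\epsilon, W+1$, let $G$ have edge set $\{(s,u_i)\}\cup\{(u_i,t)\}$ for $i\in[n-2]$ with Euclidean edge weights, and let $r(s)=1$, $r(x)=W$ for all other vertices $x$; for $W$ sufficiently large relative to $n$ and $\epsilon$ sufficiently small relative to $1/n$, this works. Thus the weight-coefficient of connected SDGs of $1$-dimensional Euclidean $n$-vertex graphs can be $\Omega(n)$.
   Context: A $1$-dimensional Euclidean graph is a weighted graph whose vertices are points on a line and whose edges (not necessarily all pairs) have weight equal to the Euclidean distance between their endpoints. For a weighted graph $G=(V,E,w)$ and $r:V\to\mathbb{R}^+$, $SDG(G,r)$ is the spanning subgraph of $G$ containing edge $e=(u,v)\in E$ iff $r(u)\ge w(e)$ and $r(v)\ge w(e)$. The weight-coefficient of a connected spanning subgraph $G'$ of $G$ with respect to $G$ is $w(MST(G'))/w(MST(G))$. *)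

theory Defs
  imports Complex_Main
begin

definition euclid_graph_1d :: "real set \<Rightarrow> real set set \<Rightarrow> bool" where
  "euclid_graph_1d V E \<longleftrightarrow> finite V \<and>
     E \<subseteq> {{a, b} | a b. a \<in> V \<and> b \<in> V \<and> a \<noteq> b}"

definition ewt :: "real set \<Rightarrow> real" where
  "ewt e = (THE d. \<exists>a b. e = {a, b} \<and> d = \<bar>a - b\<bar>)"

definition adj :: "real set set \<Rightarrow> real \<Rightarrow> real \<Rightarrow> bool" where
  "adj E u v \<longleftrightarrow> {u, v} \<in> E"

definition connected_graph :: "real set \<Rightarrow> real set set \<Rightarrow> bool" where
  "connected_graph V F \<longleftrightarrow> (\<forall>u\<in>V. \<forall>v\<in>V. (adj F)\<^sup>*\<^sup>* u v)"

definition spanning_tree :: "real set \<Rightarrow> real set set \<Rightarrow> real set set \<Rightarrow> bool" where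
  "spanning_tree V E T \<longleftrightarrow> T \<subseteq> E \<and> connected_graph V T \<and> card T = card V - 1"

definition mst_weight :: "real set \<Rightarrow> real set set \<Rightarrow> real" where
  "mst_weight V E = Min {(\<Sum>e\<in>T. ewt e) | T. spanning_tree V E T}"

definition sdg :: "real set set \<Rightarrow> (real \<Rightarrow> real) \<Rightarrow> real set set" where
  "sdg E r = {e \<in> E. \<forall>x\<in>e. r x \<ge> ewt e}"

definition weight_coeff :: "real set \<Rightarrow> real set set \<Rightarrow> real set set \<Rightarrow> real" where
  "weight_coeff V E F = mst_weight V F / mst_weight V E"

end

theory Submission
  imports Defs
begin

lemma ewt_pair: "ewt {a,b} = \<bar>a-b\<bar>"
  unfolding ewt_def
  by (rule the_equality) (auto simp: doubleton_eq_iff abs_minus_commute)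

lemma adj_sym_rtr: "(adj F)\<^sup>*\<^sup>* a b \<Longrightarrow> (adj F)\<^sup>*\<^sup>* b a"
proof (induction rule: rtranclp_induct)
  case base then show ?case by simp
next
  case (step y z)
  have "adj F z y" using step(2) by (simp add: adj_def insert_commute)
  then show ?case using step(3) by (rule converse_rtranclp_into_rtranclp)
qed

lemma conn_hub: assumes "\<forall>v\<in>V. (adj F)\<^sup>*\<^sup>* v c" shows "connected_graph V F"
  unfolding connected_graph_def
  using assms adj_sym_rtr rtranclp_trans by metis

lemma adjI: "{u,v} \<in> F \<Longrightarrow> adj F u v" by (simp add: adj_def)

theorem mainTheorem7:
  fixes n :: nat and \<eta> :: real
  assumes "n \<ge> 3" and "\<eta> > 0"
  shows "\<exists>V E (r :: real \<Rightarrow> real).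
           euclid_graph_1d V E \<and> card V = n \<and> (\<forall>x\<in>V. r x > 0) \<and>
           connected_graph V (sdg E r) \<and>
           weight_coeff V E (sdg E r) \<ge> real n - 2 - \<eta>"
proof -
  define k where "k = n - 2"
  have k1: "k \<ge> 1" and nk: "n = k + 2" using assms(1) by (auto simp: k_def)
  define W :: real where "W = (2*real k^2+real k)/\<eta> + 2"
  have Wge: "(2*real k^2+real k)/\<eta> \<ge> 0" using assms(2) by simp
  have W2: "W \<ge> 2" using Wge by (simp add: W_def)
  have etaW: "\<eta> * W = 2*real k^2 + real k + 2*\<eta>"
    using assms(2) by (simp add: W_def field_simps)
  define u where "u = (\<lambda>i::nat. 1 + real i / real k)"
  define t where "t = W + 1"
  have u1: "u i \<ge> 1" for i by (simp add: u_def)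
  have u2: "i < k \<Longrightarrow> u i < 2" for i using k1 by (simp add: u_def divide_less_eq)
  have u0: "u 0 = 1" by (simp add: u_def)
  have uinj: "u i = u j \<Longrightarrow> i = j" for i j using k1 by (simp add: u_def)
  have u_eq1: "u i = 1 \<longleftrightarrow> i = 0" for i using k1 by (simp add: u_def)
  have t3: "t > 2" using W2 by (simp add: t_def)
  have tu: "i < k \<Longrightarrow> u i \<noteq> t" for i using u2 t3 by force
  have u_ne0: "u i \<noteq> 0" for i using u1[of i] by linarith
  define V where "V = insert 0 (insert t (u ` {..<k}))"
  define A where "A = (\<lambda>i. {0, u i}) ` {..<k}"
  define B where "B = (\<lambda>i. {u i, t}) ` {..<k}"
  define E where "E = A \<union> B"
  define r where "r = (\<lambda>x::real. if x = 0 then 1 else W)"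
  define F where "F = insert {0, u 0} B"
  define T0 where "T0 = insert {u 0, t} A"
  have cardU: "card (u ` {..<k}) = k"
    by (subst card_image) (auto intro: inj_onI uinj)
  have cardV: "card V = n"
  proof -
    have "t \<notin> u ` {..<k}" using tu by auto
    moreover have "0 \<notin> insert t (u ` {..<k})" using u_ne0 t3 by auto
    ultimately show ?thesis using cardU nk by (simp add: V_def)
  qed
  have finV: "finite V" by (simp add: V_def)
  have injA: "inj_on (\<lambda>i. {0, u i}) {..<k}"
    by (rule inj_onI) (auto simp: doubleton_eq_iff u_ne0 dest: uinj)
  have injB: "inj_on (\<lambda>i. {u i, t}) {..<k}"
    by (rule inj_onI) (auto simp: doubleton_eq_iff dest: uinj tu)
  have cardA: "card A = k" using injA by (simp add: A_def card_image)
  have cardB: "card B = k" using injB by (simp add: B_def card_image)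
  have finE: "finite E" by (simp add: E_def A_def B_def)
  have finF: "finite F" by (simp add: F_def B_def)
  have finT0: "finite T0" by (simp add: T0_def A_def)
  have k0: "0 \<in> {..<k}" using k1 by simp
  have cardF: "card F = k + 1"
    using cardB tu k0 u_ne0 t3 by (auto simp: F_def B_def finF doubleton_eq_iff card_insert_if)
  have cardT0: "card T0 = k + 1"
  proof -
    have "{u 0, t} \<notin> A" using t3 u_ne0 by (auto simp: A_def doubleton_eq_iff)
    then show ?thesis using cardA by (simp add: T0_def A_def)
  qed
  have eg: "euclid_graph_1d V E"
    unfolding euclid_graph_1d_def
  proof (intro conjI subsetI)
    fix e assume "e \<in> E"
    then consider i where "i<k" "e = {0, u i}" | i where "i<k" "e = {u i, t}"
      by (auto simp: E_def A_def B_def)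
    then show "e \<in> {{a, b} |a b. a \<in> V \<and> b \<in> V \<and> a \<noteq> b}"
    proof cases
      case 1 then show ?thesis using u_ne0[of i] by (auto simp: V_def)
    next
      case 2 then show ?thesis using tu[of i] by (auto simp: V_def)
    qed
  qed (rule finV)
  have rpos: "\<forall>x\<in>V. r x > 0" using W2 by (simp add: r_def)
  have ewtA: "ewt {0, u i} = u i" for i using u1[of i] by (simp add: ewt_pair)
  have ewtB: "i < k \<Longrightarrow> ewt {u i, t} = t - u i" for i using u2[of i] t3 by (simp add: ewt_pair)
  have sdgE: "sdg E r = F"
  proof (rule set_eqI)
    fix e
    show "e \<in> sdg E r \<longleftrightarrow> e \<in> F"
    proof
      assume e: "e \<in> sdg E r"
      then have eE: "e \<in> E" and c: "\<forall>x\<in>e. r x \<ge> ewt e" by (auto simp: sdg_def)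
      show "e \<in> F"
      proof (cases "e \<in> A")
        case True
        then obtain i where i: "i < k" "e = {0, u i}" by (auto simp: A_def)
        have "r 0 \<ge> u i" using c i ewtA by auto
        then have "u i \<le> 1" by (simp add: r_def)
        then have "i = 0" using u1[of i] u_eq1 by (meson antisym)
        then show ?thesis using i by (simp add: F_def)
      next
        case False
        then show ?thesis using eE by (simp add: E_def F_def)
      qed
    next
      assume e: "e \<in> F"
      show "e \<in> sdg E r"
      proof (cases "e = {0, u 0}")
        case True
        then show ?thesis using k0 u0 W2 u_ne0
          by (auto simp: sdg_def E_def A_def ewt_pair r_def)
      next
        case False
        then obtain i where i: "i < k" "e = {u i, t}" using e by (auto simp: F_def B_def)
        have "u i \<ge> 1" by (rule u1)
        then have "\<forall>x\<in>e. r x \<ge> ewt e" using i ewtB[OF i(1)] u_ne0 t3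
          by (auto simp: r_def t_def)
        moreover have "e \<in> E" using i by (auto simp: E_def B_def)
        ultimately show ?thesis by (simp add: sdg_def)
      qed
    qed
  qed
  have connF: "connected_graph V F"
  proof (rule conn_hub[where c = t], rule ballI)
    fix v assume "v \<in> V"
    then consider "v = 0" | "v = t" | i where "i < k" "v = u i" by (auto simp: V_def)
    then show "(adj F)\<^sup>*\<^sup>* v t"
    proof cases
      case 1
      have "adj F 0 (u 0)" by (rule adjI) (simp add: F_def)
      moreover have "adj F (u 0) t" by (rule adjI) (use k0 in \<open>auto simp: F_def B_def\<close>)
      ultimately show ?thesis using 1 by (meson r_into_rtranclp rtranclp.rtrancl_into_rtrancl)
    next
      case 2 then show ?thesis by simp
    next
      case 3
      have "adj F (u i) t" by (rule adjI) (use 3 in \<open>auto simp: F_def B_def\<close>)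
      then show ?thesis using 3 by simp
    qed
  qed
  have connT0: "connected_graph V T0"
  proof (rule conn_hub[where c = 0], rule ballI)
    fix v assume "v \<in> V"
    then consider "v = 0" | "v = t" | i where "i < k" "v = u i" by (auto simp: V_def)
    then show "(adj T0)\<^sup>*\<^sup>* v 0"
    proof cases
      case 1 then show ?thesis by simp
    next
      case 2
      have "adj T0 t (u 0)" by (rule adjI) (simp add: T0_def insert_commute)
      moreover have "adj T0 (u 0) 0" by (rule adjI) (use k0 in \<open>auto simp: T0_def A_def insert_commute\<close>)
      ultimately show ?thesis using 2 by (meson r_into_rtranclp rtranclp.rtrancl_into_rtrancl)
    next
      case 3
      have "adj T0 (u i) 0" by (rule adjI) (use 3 in \<open>auto simp: T0_def A_def insert_commute\<close>)
      then show ?thesis using 3 by simp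
    qed
  qed
  have FE: "F \<subseteq> E" using k0 by (auto simp: F_def E_def A_def)
  have T0E: "T0 \<subseteq> E" using k0 by (auto simp: T0_def E_def A_def B_def)
  have stF: "spanning_tree V F F" using connF cardF cardV nk by (simp add: spanning_tree_def)
  have stF_only: "spanning_tree V F T \<Longrightarrow> T = F" for T
    using cardF cardV nk finF card_subset_eq[of F T] by (auto simp: spanning_tree_def)
  have mstF: "mst_weight V F = (\<Sum>e\<in>F. ewt e)"
  proof -
    have "{(\<Sum>e\<in>T. ewt e) | T. spanning_tree V F T} = {\<Sum>e\<in>F. ewt e}"
      using stF stF_only by blast
    then show ?thesis by (simp add: mst_weight_def)
  qed
  define S where "S = {(\<Sum>e\<in>T. ewt e) | T. spanning_tree V E T}"
  have stT0: "spanning_tree V E T0" using connT0 cardT0 cardV nk T0E by (simp add: spanning_tree_def)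
  have finS: "finite S"
  proof -
    have "S \<subseteq> (\<lambda>T. \<Sum>e\<in>T. ewt e) ` Pow E" by (auto simp: S_def spanning_tree_def)
    then show ?thesis using finE finite_subset by blast
  qed
  have T0S: "(\<Sum>e\<in>T0. ewt e) \<in> S" using stT0 by (auto simp: S_def)
  have Spos: "\<forall>s\<in>S. s > 0"
  proof
    fix s assume "s \<in> S"
    then obtain T where T: "spanning_tree V E T" "s = (\<Sum>e\<in>T. ewt e)" by (auto simp: S_def)
    have TE: "T \<subseteq> E" and cT: "card T = k + 1" using T cardV nk by (auto simp: spanning_tree_def)
    have finT: "finite T" using TE finE finite_subset by blast
    have ne: "T \<noteq> {}" using cT by auto
    have pos: "\<forall>e\<in>E. ewt e > 0"
      using u_ne0 tu by (auto simp: E_def A_def B_def ewt_pair)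
    show "s > 0" using T(2) finT ne pos TE by (auto intro!: sum_pos)
  qed
  have mstE: "mst_weight V E = Min S" by (simp add: mst_weight_def S_def)
  have minle: "Min S \<le> (\<Sum>e\<in>T0. ewt e)" using finS T0S by simp
  have minpos: "Min S > 0" using finS T0S Spos by (metis Min_in empty_iff)
  have sumF: "(\<Sum>e\<in>F. ewt e) = 1 + (\<Sum>i<k. t - u i)"
  proof -
    have "{0, u 0} \<notin> B" using u_ne0 t3 by (auto simp: B_def doubleton_eq_iff)
    then have "(\<Sum>e\<in>F. ewt e) = ewt {0, u 0} + (\<Sum>e\<in>B. ewt e)"
      by (simp add: F_def B_def)
    also have "(\<Sum>e\<in>B. ewt e) = (\<Sum>i<k. ewt {u i, t})"
      unfolding B_def by (subst sum.reindex[OF injB]) simp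
    also have "\<dots> = (\<Sum>i<k. t - u i)" by (rule sum.cong) (auto simp: ewtB)
    finally show ?thesis using ewtA u0 by (simp add: ewt_pair)
  qed
  have sumT0: "(\<Sum>e\<in>T0. ewt e) = W + (\<Sum>i<k. u i)"
  proof -
    have "{u 0, t} \<notin> A" using t3 u_ne0 by (auto simp: A_def doubleton_eq_iff)
    then have "(\<Sum>e\<in>T0. ewt e) = ewt {u 0, t} + (\<Sum>e\<in>A. ewt e)"
      by (simp add: T0_def A_def)
    also have "(\<Sum>e\<in>A. ewt e) = (\<Sum>i<k. ewt {0, u i})"
      unfolding A_def by (subst sum.reindex[OF injA]) simp
    also have "\<dots> = (\<Sum>i<k. u i)" by (simp add: ewtA)
    finally show ?thesis using ewtB[of 0] k1 u0 by (simp add: t_def)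
  qed
  have lbF: "(\<Sum>e\<in>F. ewt e) \<ge> real k * (W - 1)"
  proof -
    have "(\<Sum>i<k. W - 1) \<le> (\<Sum>i<k. t - u i)"
      by (rule sum_mono) (use u2 in \<open>force simp: t_def\<close>)
    then show ?thesis using sumF by simp
  qed
  have ubT0: "(\<Sum>e\<in>T0. ewt e) \<le> W + 2 * real k"
  proof -
    have "(\<Sum>i<k. u i) \<le> (\<Sum>i<k. 2)" by (rule sum_mono) (use u2 in force)
    then show ?thesis using sumT0 by simp
  qed
  have Fnn: "(\<Sum>e\<in>F. ewt e) \<ge> 0" using lbF W2 by (smt (verit) mult_nonneg_nonneg of_nat_0_le_iff)
  have wceq: "weight_coeff V E F = (\<Sum>e\<in>F. ewt e) / Min S"
    by (simp add: weight_coeff_def mstF mstE)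
  have c1: "(\<Sum>e\<in>F. ewt e) / (W + 2 * real k) \<le> (\<Sum>e\<in>F. ewt e) / Min S"
    using minle ubT0 minpos Fnn by (intro divide_left_mono) auto
  have c2: "real k * (W - 1) / (W + 2 * real k) \<le> (\<Sum>e\<in>F. ewt e) / (W + 2 * real k)"
    using lbF W2 by (intro divide_right_mono) auto
  have c3: "real k - \<eta> \<le> real k * (W - 1) / (W + 2 * real k)"
  proof -
    have den: "W + 2 * real k > 0" using W2 by simp
    have "(real k - \<eta>) * (W + 2 * real k) \<le> real k * (W - 1)"
    proof -
      have "(real k - \<eta>) * (W + 2 * real k) = real k * W + 2 * real k^2 - \<eta> * W - 2 * real k * \<eta>"
        by (simp add: algebra_simps power2_eq_square)
      also have "\<dots> = real k * W - real k - 2*\<eta> - 2 * real k * \<eta>" using etaW by simp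
      also have "\<dots> \<le> real k * (W - 1)" using assms(2) by (simp add: algebra_simps)
      finally show ?thesis .
    qed
    then show ?thesis using den by (simp add: pos_le_divide_eq)
  qed
  have "real k - \<eta> \<le> weight_coeff V E F" using wceq c1 c2 c3 by linarith
  then have wc: "weight_coeff V E F \<ge> real n - 2 - \<eta>" using nk by simp
  show ?thesis
    by (rule exI[of _ V], rule exI[of _ E], rule exI[of _ r])
       (use eg cardV rpos connF sdgE wc in simp)
qed

end
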